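(* Let $G$ and $H$ be graphs with $i_G$ and $i_H$ isolated vertices, respectively. Then $$\rho_o(G\boxtimes H)\geq\rho(G^-)\rho(H^-)+i_G\rho_o(H)+i_H\rho_o(G)-i_Gi_H$$ and $$\rho_o(G\boxtimes H)\leq \min\{\rho(G^-)\gamma_f(H^-),\ \rho(H^-)\gamma_f(G^-)\}+i_G\rho_o(H)+i_H\rho_o(G)-i_Gi_H.$$
   Context: All graphs are finite and simple. $G^-$ denotes the graph obtained from $G$ by deleting all isolated vertices. A packing of $G$ is a set $P\subseteq V(G)$ with $N[u]\cap N[v]=\emptyset$ for all distinct $u,v\in P$ ($N[\cdot]$ the closed neighborhood); $\rho(G)$ is the maximum size of a packing. An open packing is a set whose vertices have pairwise disjoint open neighborhoods; $\rho_o(G)$ is its maximum size. The fractional domination number $\gamma_f(G)$ is the minimum of $\sum_{v\in V(G)} f(v)$ over all functions $f:V(G)\to[0,1]$ with $\sum_{u\in N[v]}f(u)\ge 1$ for every $v\in V(G)$ (taken to be $0$ for the empty graph). The strong product $G\boxtimes H$ has vertex set $V(G)\times V(H)$, where distinct $(g,h),(g',h')$ are adjacent iff ($g=g'$ or $gg'\in E(G)$) and ($h=h'$ or $hh'\in E(H)$). *)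

theory Defs
  imports Complex_Main
begin

definition graph :: "'a set \<Rightarrow> ('a \<Rightarrow> 'a \<Rightarrow> bool) \<Rightarrow> bool" where
  "graph V E \<longleftrightarrow> finite V \<and> (\<forall>u v. E u v \<longrightarrow> u \<in> V \<and> v \<in> V)
     \<and> (\<forall>u v. E u v \<longrightarrow> E v u) \<and> (\<forall>v. \<not> E v v)"

definition nbhd :: "'a set \<Rightarrow> ('a \<Rightarrow> 'a \<Rightarrow> bool) \<Rightarrow> 'a \<Rightarrow> 'a set" where
  "nbhd V E v = {u \<in> V. E v u}"

definition cnbhd :: "'a set \<Rightarrow> ('a \<Rightarrow> 'a \<Rightarrow> bool) \<Rightarrow> 'a \<Rightarrow> 'a set" where
  "cnbhd V E v = insert v (nbhd V E v)"

definition packing :: "'a set \<Rightarrow> ('a \<Rightarrow> 'a \<Rightarrow> bool) \<Rightarrow> 'a set \<Rightarrow> bool" where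
  "packing V E P \<longleftrightarrow> P \<subseteq> V \<and>
     (\<forall>u\<in>P. \<forall>v\<in>P. u \<noteq> v \<longrightarrow> cnbhd V E u \<inter> cnbhd V E v = {})"

definition open_packing :: "'a set \<Rightarrow> ('a \<Rightarrow> 'a \<Rightarrow> bool) \<Rightarrow> 'a set \<Rightarrow> bool" where
  "open_packing V E P \<longleftrightarrow> P \<subseteq> V \<and>
     (\<forall>u\<in>P. \<forall>v\<in>P. u \<noteq> v \<longrightarrow> nbhd V E u \<inter> nbhd V E v = {})"

definition packing_number :: "'a set \<Rightarrow> ('a \<Rightarrow> 'a \<Rightarrow> bool) \<Rightarrow> nat" where
  "packing_number V E = Max (card ` {P. packing V E P})"

definition open_packing_number :: "'a set \<Rightarrow> ('a \<Rightarrow> 'a \<Rightarrow> bool) \<Rightarrow> nat" where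
  "open_packing_number V E = Max (card ` {P. open_packing V E P})"

text \<open>Fractional domination number (infimum = minimum of the LP; 0 for the empty graph).\<close>
definition frac_dom :: "'a set \<Rightarrow> ('a \<Rightarrow> 'a \<Rightarrow> bool) \<Rightarrow> real" where
  "frac_dom V E = Inf ((\<lambda>f. \<Sum>v\<in>V. f v) `
     {f :: 'a \<Rightarrow> real. (\<forall>v\<in>V. 0 \<le> f v \<and> f v \<le> 1) \<and>
                        (\<forall>v\<in>V. (\<Sum>u\<in>cnbhd V E v. f u) \<ge> 1)})"

definition isolated :: "'a set \<Rightarrow> ('a \<Rightarrow> 'a \<Rightarrow> bool) \<Rightarrow> 'a set" where
  "isolated V E = {v \<in> V. nbhd V E v = {}}"

definition del_iso_V :: "'a set \<Rightarrow> ('a \<Rightarrow> 'a \<Rightarrow> bool) \<Rightarrow> 'a set" where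
  "del_iso_V V E = V - isolated V E"

definition del_iso_E :: "'a set \<Rightarrow> ('a \<Rightarrow> 'a \<Rightarrow> bool) \<Rightarrow> 'a \<Rightarrow> 'a \<Rightarrow> bool" where
  "del_iso_E V E u v \<longleftrightarrow> E u v \<and> u \<in> del_iso_V V E \<and> v \<in> del_iso_V V E"

definition strong_V :: "'a set \<Rightarrow> 'b set \<Rightarrow> ('a \<times> 'b) set" where
  "strong_V VG VH = VG \<times> VH"

definition strong_E :: "'a set \<Rightarrow> ('a \<Rightarrow> 'a \<Rightarrow> bool) \<Rightarrow> 'b set \<Rightarrow> ('b \<Rightarrow> 'b \<Rightarrow> bool)
    \<Rightarrow> 'a \<times> 'b \<Rightarrow> 'a \<times> 'b \<Rightarrow> bool" where
  "strong_E VG EG VH EH x y \<longleftrightarrow>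
     x \<in> VG \<times> VH \<and> y \<in> VG \<times> VH \<and> x \<noteq> y \<and>
     (fst x = fst y \<or> EG (fst x) (fst y)) \<and> (snd x = snd y \<or> EH (snd x) (snd y))"

end

theory Submission
  imports Defs
begin


lemma fin_pk: "finite V \<Longrightarrow> finite (card ` {P. packing V E P})"
proof -
  assume f: "finite V"
  have "{P. packing V E P} \<subseteq> Pow V" by (auto simp: packing_def)
  hence "finite {P. packing V E P}" using f by (meson finite_Pow_iff finite_subset)
  thus ?thesis by (rule finite_imageI)
qed

lemma fin_opk: "finite V \<Longrightarrow> finite (card ` {P. open_packing V E P})"
proof -
  assume f: "finite V"
  have "{P. open_packing V E P} \<subseteq> Pow V" by (auto simp: open_packing_def)
  hence "finite {P. open_packing V E P}" using f by (meson finite_Pow_iff finite_subset)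
  thus ?thesis by (rule finite_imageI)
qed

lemma pn_ge: "finite V \<Longrightarrow> packing V E P \<Longrightarrow> card P \<le> packing_number V E"
  unfolding packing_number_def
  by (rule Max_ge[OF fin_pk]) auto

lemma pn_ex: "finite V \<Longrightarrow> \<exists>P. packing V E P \<and> card P = packing_number V E"
proof -
  assume f: "finite V"
  have ne: "card ` {P. packing V E P} \<noteq> {}" by (auto simp: packing_def)
  have "packing_number V E \<in> card ` {P. packing V E P}"
    unfolding packing_number_def by (rule Max_in[OF fin_pk[OF f] ne])
  thus ?thesis by auto
qed

lemma opn_ge: "finite V \<Longrightarrow> open_packing V E P \<Longrightarrow> card P \<le> open_packing_number V E"
  unfolding open_packing_number_def
  by (rule Max_ge[OF fin_opk]) auto

lemma opn_ex: "finite V \<Longrightarrow> \<exists>P. open_packing V E P \<and> card P = open_packing_number V E"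
proof -
  assume f: "finite V"
  have ne: "card ` {P. open_packing V E P} \<noteq> {}" by (auto simp: open_packing_def)
  have "open_packing_number V E \<in> card ` {P. open_packing V E P}"
    unfolding open_packing_number_def by (rule Max_in[OF fin_opk[OF f] ne])
  thus ?thesis by auto
qed

definition noiso :: "'a set \<Rightarrow> ('a \<Rightarrow> 'a \<Rightarrow> bool) \<Rightarrow> bool" where
  "noiso V E \<longleftrightarrow> (\<forall>v\<in>V. \<exists>u. E v u)"

definition sq :: "'a set \<Rightarrow> ('a\<Rightarrow>'a\<Rightarrow>bool) \<Rightarrow> 'b set \<Rightarrow> ('b\<Rightarrow>'b\<Rightarrow>bool) \<Rightarrow> ('a\<times>'b) set \<Rightarrow> bool" where
  "sq VG EG VH EH S \<longleftrightarrow> S \<subseteq> VG \<times> VH \<and> (\<forall>p\<in>S. \<forall>q\<in>S. p\<noteq>q \<longrightarrow> (\<forall>x y.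
     x \<in> cnbhd VG EG (fst p) \<longrightarrow> x \<in> cnbhd VG EG (fst q) \<longrightarrow>
     y \<in> cnbhd VH EH (snd p) \<longrightarrow> y \<in> cnbhd VH EH (snd q) \<longrightarrow> (x,y)=p \<or> (x,y)=q))"

lemma sq_swap: "sq VG EG VH EH S \<Longrightarrow> sq VH EH VG EG (prod.swap ` S)"
proof -
  assume a: "sq VG EG VH EH S"
  have sub: "S \<subseteq> VG \<times> VH" using a unfolding sq_def by blast
  have all: "\<forall>p\<in>S. \<forall>q\<in>S. p\<noteq>q \<longrightarrow> (\<forall>x y.
     x \<in> cnbhd VG EG (fst p) \<longrightarrow> x \<in> cnbhd VG EG (fst q) \<longrightarrow>
     y \<in> cnbhd VH EH (snd p) \<longrightarrow> y \<in> cnbhd VH EH (snd q) \<longrightarrow> (x,y)=p \<or> (x,y)=q)"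
    using a unfolding sq_def by (rule conjunct2)
  show ?thesis unfolding sq_def
  proof (intro conjI ballI impI allI)
    show "prod.swap ` S \<subseteq> VH \<times> VG" using sub by auto
    fix p q x y assume p: "p \<in> prod.swap ` S" and q: "q \<in> prod.swap ` S" and pq: "p \<noteq> q"
      and h: "x \<in> cnbhd VH EH (fst p)" "x \<in> cnbhd VH EH (fst q)"
         "y \<in> cnbhd VG EG (snd p)" "y \<in> cnbhd VG EG (snd q)"
    obtain p0 q0 where p0: "p0 \<in> S" "p = prod.swap p0" and q0: "q0 \<in> S" "q = prod.swap q0"
      using p q by auto
    have "p0 \<noteq> q0" using pq p0 q0 by auto
    have "(y,x) = p0 \<or> (y,x) = q0"
      by (rule all[rule_format, OF p0(1) q0(1) \<open>p0 \<noteq> q0\<close>]) (use h p0 q0 in auto)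
    thus "(x,y) = p \<or> (x,y) = q" using p0 q0 by auto
  qed
qed

lemma step1:
  assumes g: "graph VG EG" "graph VH EH" and n: "noiso VG EG" "noiso VH EH"
    and s: "sq VG EG VH EH S" and p: "p \<in> S" and q: "q \<in> S" and pq: "p \<noteq> q"
  shows "cnbhd VG EG (fst p) \<inter> cnbhd VG EG (fst q) = {} \<or> cnbhd VH EH (snd p) \<inter> cnbhd VH EH (snd q) = {}"
proof (rule ccontr)
  obtain p1 p2 q1 q2 where pp: "p = (p1,p2)" and qq: "q = (q1,q2)" by (cases p, cases q) auto
  have pV: "p1 \<in> VG" "p2 \<in> VH" "q1 \<in> VG" "q2 \<in> VH" using s p q pp qq unfolding sq_def by auto
  have all: "\<forall>p\<in>S. \<forall>q\<in>S. p\<noteq>q \<longrightarrow> (\<forall>x y.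
     x \<in> cnbhd VG EG (fst p) \<longrightarrow> x \<in> cnbhd VG EG (fst q) \<longrightarrow>
     y \<in> cnbhd VH EH (snd p) \<longrightarrow> y \<in> cnbhd VH EH (snd q) \<longrightarrow> (x,y)=p \<or> (x,y)=q)"
    using s unfolding sq_def by (rule conjunct2)
  note Q = all[rule_format, OF p q pq, unfolded pp qq fst_conv snd_conv]
  assume "\<not> ?thesis"
  then obtain x y where x: "x \<in> cnbhd VG EG p1" "x \<in> cnbhd VG EG q1"
    and y: "y \<in> cnbhd VH EH p2" "y \<in> cnbhd VH EH q2" using pp qq by auto
  have symG: "\<And>u v. EG u v \<Longrightarrow> EG v u" and symH: "\<And>u v. EH u v \<Longrightarrow> EH v u"
    and irG: "\<And>v. \<not> EG v v" and irH: "\<And>v. \<not> EH v v"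
    and inG: "\<And>u v. EG u v \<Longrightarrow> u \<in> VG \<and> v \<in> VG"
    and inH: "\<And>u v. EH u v \<Longrightarrow> u \<in> VH \<and> v \<in> VH"
    using g unfolding graph_def by auto
  have cG: "\<And>u v. v \<in> cnbhd VG EG u \<longleftrightarrow> v = u \<or> EG u v" unfolding cnbhd_def nbhd_def using inG by auto
  have cH: "\<And>u v. v \<in> cnbhd VH EH u \<longleftrightarrow> v = u \<or> EH u v" unfolding cnbhd_def nbhd_def using inH by auto
  have adj: "(p1 = q1 \<or> EG p1 q1) \<and> (p2 = q2 \<or> EH p2 q2)"
    using Q[OF x y] x y cG cH symG symH by auto
  have a1: "q1 \<in> cnbhd VG EG p1" "p1 \<in> cnbhd VG EG q1" using adj cG symG by auto
  have a2: "q2 \<in> cnbhd VH EH p2" "p2 \<in> cnbhd VH EH q2" using adj cH symH by auto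
  show False
  proof (cases "p1 = q1")
    case True
    then have "p2 \<noteq> q2" using pq pp qq by auto
    obtain u where u: "EG p1 u" using n pV unfolding noiso_def by auto
    have "(u,p2)=(p1,p2) \<or> (u,p2)=(q1,q2)"
      by (rule Q) (use u True cG cH a2 in auto)
    thus False using u irG True by auto
  next
    case F: False
    show False
    proof (cases "p2 = q2")
      case True
      obtain u where u: "EH p2 u" using n pV unfolding noiso_def by auto
      have "(p1,u)=(p1,p2) \<or> (p1,u)=(q1,q2)"
        by (rule Q) (use u True cG cH a1 in auto)
      thus False using u irH True by auto
    next
      case False
      have "(q1,p2)=(p1,p2) \<or> (q1,p2)=(q1,q2)"
        by (rule Q) (use a1 a2 cG cH in auto)
      thus False using F False by auto
    qed
  qed
qed



lemma step2:
  assumes g: "graph VG EG" "graph VH EH" and n: "noiso VG EG" "noiso VH EH"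
    and s: "sq VG EG VH EH S"
  shows "card {p\<in>S. h \<in> cnbhd VH EH (snd p)} \<le> packing_number VG EG"
proof -
  define T where "T = {p\<in>S. h \<in> cnbhd VH EH (snd p)}"
  have sub: "S \<subseteq> VG \<times> VH" using s unfolding sq_def by blast
  have key: "cnbhd VG EG (fst p) \<inter> cnbhd VG EG (fst q) = {}" if "p \<in> T" "q \<in> T" "p \<noteq> q" for p q
  proof -
    have "h \<in> cnbhd VH EH (snd p) \<inter> cnbhd VH EH (snd q)" using that unfolding T_def by auto
    thus ?thesis using step1[OF g n s, of p q] that unfolding T_def by auto
  qed
  have self: "\<And>v. v \<in> cnbhd VG EG v" unfolding cnbhd_def by auto
  have inj: "inj_on fst T"
  proof (rule inj_onI)
    fix p q assume "p \<in> T" "q \<in> T" "fst p = fst q"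
    thus "p = q" using key[of p q] self[of "fst p"] by auto
  qed
  have pk: "packing VG EG (fst ` T)"
    unfolding packing_def
  proof (intro conjI ballI impI)
    show "fst ` T \<subseteq> VG" using sub unfolding T_def by auto
    fix u v assume "u \<in> fst ` T" "v \<in> fst ` T" "u \<noteq> v"
    then obtain p q where "p \<in> T" "q \<in> T" "u = fst p" "v = fst q" "p \<noteq> q" by auto
    thus "cnbhd VG EG u \<inter> cnbhd VG EG v = {}" using key by auto
  qed
  have fin: "finite VG" using g unfolding graph_def by auto
  have "card T = card (fst ` T)" using card_image[OF inj] by simp
  also have "\<dots> \<le> packing_number VG EG" by (rule pn_ge[OF fin pk])
  finally show ?thesis unfolding T_def .
qed

lemma step3:
  assumes g: "graph VG EG" "graph VH EH" and n: "noiso VG EG" "noiso VH EH"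
    and s: "sq VG EG VH EH S"
    and f: "\<forall>v\<in>VH. 0 \<le> f v \<and> f v \<le> 1" "\<forall>v\<in>VH. (\<Sum>u\<in>cnbhd VH EH v. f u) \<ge> 1"
  shows "real (card S) \<le> real (packing_number VG EG) * (\<Sum>v\<in>VH. f v)"
proof -
  have sub: "S \<subseteq> VG \<times> VH" using s unfolding sq_def by blast
  have finG: "finite VG" and finH: "finite VH" using g unfolding graph_def by auto
  have finS: "finite S" using sub finG finH by (meson finite_SigmaI finite_subset)
  have cH: "cnbhd VH EH v \<subseteq> VH" if "v \<in> VH" for v
    using that unfolding cnbhd_def nbhd_def by auto
  have "real (card S) = (\<Sum>p\<in>S. 1)" by simp
  also have "\<dots> \<le> (\<Sum>p\<in>S. \<Sum>u\<in>cnbhd VH EH (snd p). f u)"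
    by (rule sum_mono) (use f(2) sub in auto)
  also have "\<dots> = (\<Sum>p\<in>S. \<Sum>u\<in>VH. if u \<in> cnbhd VH EH (snd p) then f u else 0)"
  proof (rule sum.cong[OF refl])
    fix p assume "p \<in> S"
    hence "snd p \<in> VH" using sub by auto
    hence C: "cnbhd VH EH (snd p) \<subseteq> VH" using cH by blast
    show "(\<Sum>u\<in>cnbhd VH EH (snd p). f u) = (\<Sum>u\<in>VH. if u \<in> cnbhd VH EH (snd p) then f u else 0)"
      using finH C by (simp add: sum.inter_restrict[OF finH, symmetric] Int_absorb1 Int_absorb2)
  qed
  also have "\<dots> = (\<Sum>u\<in>VH. \<Sum>p\<in>S. if u \<in> cnbhd VH EH (snd p) then f u else 0)"
    by (rule sum.swap)
  also have "\<dots> = (\<Sum>u\<in>VH. f u * real (card {p\<in>S. u \<in> cnbhd VH EH (snd p)}))"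
  proof (rule sum.cong[OF refl])
    fix u
    have "(\<Sum>p\<in>S. if u \<in> cnbhd VH EH (snd p) then f u else 0) = (\<Sum>p\<in>{p\<in>S. u \<in> cnbhd VH EH (snd p)}. f u)"
      using finS by (simp add: sum.If_cases Collect_conj_eq Int_commute)
    thus "(\<Sum>p\<in>S. if u \<in> cnbhd VH EH (snd p) then f u else 0) = f u * real (card {p\<in>S. u \<in> cnbhd VH EH (snd p)})"
      by simp
  qed
  also have "\<dots> \<le> (\<Sum>u\<in>VH. f u * real (packing_number VG EG))"
    by (rule sum_mono, rule mult_left_mono) (use step2[OF g n s] f(1) in auto)
  also have "\<dots> = real (packing_number VG EG) * (\<Sum>v\<in>VH. f v)"
    unfolding sum_distrib_right[symmetric] by (rule mult.commute)
  finally show ?thesis .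
qed

lemma step4:
  assumes g: "graph VG EG" "graph VH EH" and n: "noiso VG EG" "noiso VH EH"
    and s: "sq VG EG VH EH S"
  shows "real (card S) \<le> real (packing_number VG EG) * frac_dom VH EH"
proof -
  define F where "F = {f :: 'b \<Rightarrow> real. (\<forall>v\<in>VH. 0 \<le> f v \<and> f v \<le> 1) \<and>
                        (\<forall>v\<in>VH. (\<Sum>u\<in>cnbhd VH EH v. f u) \<ge> 1)}"
  have fd: "frac_dom VH EH = Inf ((\<lambda>f. \<Sum>v\<in>VH. f v) ` F)" unfolding frac_dom_def F_def ..
  have finH: "finite VH" using g unfolding graph_def by auto
  have one: "(\<lambda>_. 1) \<in> F"
    unfolding F_def
  proof (intro CollectI conjI ballI)
    fix v assume "v \<in> VH"
    have "cnbhd VH EH v \<noteq> {}" unfolding cnbhd_def by auto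
    moreover have "finite (cnbhd VH EH v)" using finH unfolding cnbhd_def nbhd_def by auto
    ultimately show "(\<Sum>u\<in>cnbhd VH EH v. (1::real)) \<ge> 1"
      by (simp add: Suc_leI card_gt_0_iff)
  qed auto
  have bnd: "real (card S) \<le> real (packing_number VG EG) * (\<Sum>v\<in>VH. f v)" if "f \<in> F" for f
    using step3[OF g n s, of f] that unfolding F_def by blast
  show ?thesis
  proof (cases "packing_number VG EG = 0")
    case True
    thus ?thesis using bnd[OF one] by simp
  next
    case False
    hence pos: "real (packing_number VG EG) > 0" by simp
    have "real (card S) / real (packing_number VG EG) \<le> frac_dom VH EH"
      unfolding fd
    proof (rule cInf_greatest)
      show "(\<lambda>f. \<Sum>v\<in>VH. f v) ` F \<noteq> {}" using one by blast
      fix x assume "x \<in> (\<lambda>f. \<Sum>v\<in>VH. f v) ` F"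
      then obtain f where "f \<in> F" "x = (\<Sum>v\<in>VH. f v)" by auto
      thus "real (card S) / real (packing_number VG EG) \<le> x"
        using bnd pos by (simp add: divide_le_eq mult.commute)
    qed
    thus ?thesis using pos by (simp add: divide_le_eq mult.commute)
  qed
qed



lemma iso_noedge: "graph V E \<Longrightarrow> g \<in> isolated V E \<Longrightarrow> \<not> E g a \<and> \<not> E a g"
  unfolding graph_def isolated_def nbhd_def by blast

lemma del_V: "del_iso_V V E = V - isolated V E" unfolding del_iso_V_def ..

lemma iso_sub: "isolated V E \<subseteq> V" unfolding isolated_def by auto

lemma del_E: "graph V E \<Longrightarrow> del_iso_E V E u v \<longleftrightarrow> E u v"
  unfolding del_iso_E_def del_iso_V_def isolated_def graph_def nbhd_def by blast

lemma graph_del: "graph V E \<Longrightarrow> graph (del_iso_V V E) (del_iso_E V E)"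
  unfolding graph_def del_iso_E_def del_iso_V_def by auto

lemma noiso_del: "graph V E \<Longrightarrow> noiso (del_iso_V V E) (del_iso_E V E)"
  unfolding noiso_def by (auto simp: del_E del_iso_V_def isolated_def nbhd_def)

lemma cnbhd_del: "graph V E \<Longrightarrow> g \<in> del_iso_V V E \<Longrightarrow> cnbhd (del_iso_V V E) (del_iso_E V E) g = cnbhd V E g"
proof -
  assume g: "graph V E" and gv: "g \<in> del_iso_V V E"
  have "x \<in> del_iso_V V E \<longleftrightarrow> x \<in> V" if "E g x" for x
  proof -
    have "E x g" "g \<in> V" "x \<in> V" using g that unfolding graph_def by auto
    thus ?thesis unfolding del_iso_V_def isolated_def nbhd_def by blast
  qed
  moreover have "del_iso_V V E \<subseteq> V" unfolding del_iso_V_def by auto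
  ultimately show ?thesis unfolding cnbhd_def nbhd_def using del_E[OF g] by auto
qed

lemma snbhd: "x \<in> nbhd (strong_V VG VH) (strong_E VG EG VH EH) u \<longleftrightarrow> strong_E VG EG VH EH u x"
  unfolding nbhd_def strong_V_def strong_E_def by auto

lemma cn_iff: "graph V E \<Longrightarrow> v \<in> cnbhd V E u \<longleftrightarrow> v = u \<or> E u v"
  unfolding cnbhd_def nbhd_def graph_def by auto

lemma opk_disj: "open_packing V E S \<Longrightarrow> u \<in> S \<Longrightarrow> v \<in> S \<Longrightarrow> u \<noteq> v \<Longrightarrow> x \<in> nbhd V E u \<Longrightarrow> x \<in> nbhd V E v \<Longrightarrow> False"
  unfolding open_packing_def by blast

lemma keyQ:
  assumes g: "graph VG EG" "graph VH EH"
    and S: "open_packing (strong_V VG VH) (strong_E VG EG VH EH) S"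
  shows "sq (del_iso_V VG EG) (del_iso_E VG EG) (del_iso_V VH EH) (del_iso_E VH EH)
           (S \<inter> (del_iso_V VG EG \<times> del_iso_V VH EH))"
  unfolding sq_def
proof (intro conjI ballI impI allI)
  show "S \<inter> (del_iso_V VG EG \<times> del_iso_V VH EH) \<subseteq> del_iso_V VG EG \<times> del_iso_V VH EH" by auto
  fix p q x y
  assume p: "p \<in> S \<inter> (del_iso_V VG EG \<times> del_iso_V VH EH)" and q: "q \<in> S \<inter> (del_iso_V VG EG \<times> del_iso_V VH EH)"
    and pq: "p \<noteq> q"
    and x: "x \<in> cnbhd (del_iso_V VG EG) (del_iso_E VG EG) (fst p)" "x \<in> cnbhd (del_iso_V VG EG) (del_iso_E VG EG) (fst q)"
    and y: "y \<in> cnbhd (del_iso_V VH EH) (del_iso_E VH EH) (snd p)" "y \<in> cnbhd (del_iso_V VH EH) (del_iso_E VH EH) (snd q)"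
  have x': "x \<in> cnbhd VG EG (fst p)" "x \<in> cnbhd VG EG (fst q)"
    using x cnbhd_del[OF g(1)] p q by auto
  have y': "y \<in> cnbhd VH EH (snd p)" "y \<in> cnbhd VH EH (snd q)"
    using y cnbhd_del[OF g(2)] p q by auto
  have VG: "fst p \<in> VG" "fst q \<in> VG" "snd p \<in> VH" "snd q \<in> VH" using p q by (auto simp: del_iso_V_def)
  have xV: "x \<in> VG" "y \<in> VH" using x' y' unfolding cnbhd_def nbhd_def using VG by auto
  show "(x,y) = p \<or> (x,y) = q"
  proof (rule ccontr)
    assume ne: "\<not> ((x,y) = p \<or> (x,y) = q)"
    have "(x,y) \<in> nbhd (strong_V VG VH) (strong_E VG EG VH EH) p"
      unfolding snbhd strong_E_def using ne VG xV x'(1) y'(1) cn_iff[OF g(1)] cn_iff[OF g(2)]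
      by (cases p) auto
    moreover have "(x,y) \<in> nbhd (strong_V VG VH) (strong_E VG EG VH EH) q"
      unfolding snbhd strong_E_def using ne VG xV x'(2) y'(2) cn_iff[OF g(1)] cn_iff[OF g(2)]
      by (cases q) auto
    ultimately show False using opk_disj[OF S] p q pq by blast
  qed
qed

lemma fibG:
  assumes g: "graph VG EG" "graph VH EH"
    and S: "open_packing (strong_V VG VH) (strong_E VG EG VH EH) S"
  shows "open_packing VG EG {g\<in>VG. (g,h)\<in>S}"
  unfolding open_packing_def
proof (intro conjI ballI impI)
  show "{g\<in>VG. (g,h)\<in>S} \<subseteq> VG" by auto
  fix u v assume u: "u \<in> {g\<in>VG. (g,h)\<in>S}" and v: "v \<in> {g\<in>VG. (g,h)\<in>S}" and uv: "u \<noteq> v"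
  show "nbhd VG EG u \<inter> nbhd VG EG v = {}"
  proof (rule ccontr)
    assume "nbhd VG EG u \<inter> nbhd VG EG v \<noteq> {}"
    then obtain x where x: "x \<in> VG" "EG u x" "EG v x" unfolding nbhd_def by auto
    have hV: "h \<in> VH" using S u unfolding open_packing_def strong_V_def by auto
    have irr: "x \<noteq> u" "x \<noteq> v" using x g(1) unfolding graph_def by auto
    have "(x,h) \<in> nbhd (strong_V VG VH) (strong_E VG EG VH EH) (u,h)"
      unfolding snbhd strong_E_def using x u hV irr by auto
    moreover have "(x,h) \<in> nbhd (strong_V VG VH) (strong_E VG EG VH EH) (v,h)"
      unfolding snbhd strong_E_def using x v hV irr by auto
    ultimately show False using opk_disj[OF S, of "(u,h)" "(v,h)"] u v uv by auto
  qed
qed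

lemma fibH:
  assumes g: "graph VG EG" "graph VH EH"
    and S: "open_packing (strong_V VG VH) (strong_E VG EG VH EH) S"
  shows "open_packing VH EH {h\<in>VH. (g,h)\<in>S}"
  unfolding open_packing_def
proof (intro conjI ballI impI)
  show "{h\<in>VH. (g,h)\<in>S} \<subseteq> VH" by auto
  fix u v assume u: "u \<in> {h\<in>VH. (g,h)\<in>S}" and v: "v \<in> {h\<in>VH. (g,h)\<in>S}" and uv: "u \<noteq> v"
  show "nbhd VH EH u \<inter> nbhd VH EH v = {}"
  proof (rule ccontr)
    assume "nbhd VH EH u \<inter> nbhd VH EH v \<noteq> {}"
    then obtain x where x: "x \<in> VH" "EH u x" "EH v x" unfolding nbhd_def by auto
    have hV: "g \<in> VG" using S u unfolding open_packing_def strong_V_def by auto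
    have irr: "x \<noteq> u" "x \<noteq> v" using x g(2) unfolding graph_def by auto
    have "(g,x) \<in> nbhd (strong_V VG VH) (strong_E VG EG VH EH) (g,u)"
      unfolding snbhd strong_E_def using x u hV irr by auto
    moreover have "(g,x) \<in> nbhd (strong_V VG VH) (strong_E VG EG VH EH) (g,v)"
      unfolding snbhd strong_E_def using x v hV irr by auto
    ultimately show False using opk_disj[OF S, of "(g,u)" "(g,v)"] u v uv by auto
  qed
qed

lemma add_iso: "open_packing V E F \<Longrightarrow> open_packing V E (F \<union> isolated V E)"
  unfolding open_packing_def isolated_def by auto



lemma combi:
  fixes P IG OG :: "'a set" and Q IH OH :: "'b set"
  assumes Pd0: "\<forall>g1\<in>P. \<forall>g2\<in>P. g1\<noteq>g2 \<longrightarrow> (\<forall>a. (g1 = a \<or> EG g1 a) \<longrightarrow> \<not> (g2 = a \<or> EG g2 a))"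
    and Qd0: "\<forall>g1\<in>Q. \<forall>g2\<in>Q. g1\<noteq>g2 \<longrightarrow> (\<forall>a. (g1 = a \<or> EH g1 a) \<longrightarrow> \<not> (g2 = a \<or> EH g2 a))"
    and OGd0: "\<forall>g1\<in>OG. \<forall>g2\<in>OG. g1\<noteq>g2 \<longrightarrow> (\<forall>a. EG g1 a \<longrightarrow> \<not> EG g2 a)"
    and OHd0: "\<forall>g1\<in>OH. \<forall>g2\<in>OH. g1\<noteq>g2 \<longrightarrow> (\<forall>a. EH g1 a \<longrightarrow> \<not> EH g2 a)"
    and iG0: "\<forall>g\<in>IG. \<forall>a. \<not> EG g a \<and> \<not> EG a g"
    and iH0: "\<forall>g\<in>IH. \<forall>a. \<not> EH g a \<and> \<not> EH a g"
    and PI: "P \<inter> IG = {}" and QI: "Q \<inter> IH = {}"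
    and u: "u \<in> P \<times> Q \<union> (IG \<times> OH \<union> OG \<times> IH)" and v: "v \<in> P \<times> Q \<union> (IG \<times> OH \<union> OG \<times> IH)"
    and uv: "u \<noteq> v" and xu: "x \<noteq> u" and xv: "x \<noteq> v"
    and e1: "fst u = fst x \<or> EG (fst u) (fst x)" and e2: "snd u = snd x \<or> EH (snd u) (snd x)"
    and e3: "fst v = fst x \<or> EG (fst v) (fst x)" and e4: "snd v = snd x \<or> EH (snd v) (snd x)"
  shows False
proof -
  have Pd: "\<And>g1 g2 a. g1\<in>P \<Longrightarrow> g2\<in>P \<Longrightarrow> g1\<noteq>g2 \<Longrightarrow> g1 = a \<or> EG g1 a \<Longrightarrow> g2 = a \<or> EG g2 a \<Longrightarrow> False"
    using Pd0 by blast
  have Qd: "\<And>g1 g2 a. g1\<in>Q \<Longrightarrow> g2\<in>Q \<Longrightarrow> g1\<noteq>g2 \<Longrightarrow> g1 = a \<or> EH g1 a \<Longrightarrow> g2 = a \<or> EH g2 a \<Longrightarrow> False"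
    using Qd0 by blast
  have OGd: "\<And>g1 g2 a. g1\<in>OG \<Longrightarrow> g2\<in>OG \<Longrightarrow> g1\<noteq>g2 \<Longrightarrow> EG g1 a \<Longrightarrow> EG g2 a \<Longrightarrow> False"
    using OGd0 by blast
  have OHd: "\<And>g1 g2 a. g1\<in>OH \<Longrightarrow> g2\<in>OH \<Longrightarrow> g1\<noteq>g2 \<Longrightarrow> EH g1 a \<Longrightarrow> EH g2 a \<Longrightarrow> False"
    using OHd0 by blast
  have iG: "\<And>g a. g \<in> IG \<Longrightarrow> \<not> EG g a \<and> \<not> EG a g" using iG0 by blast
  have iH: "\<And>g a. g \<in> IH \<Longrightarrow> \<not> EH g a \<and> \<not> EH a g" using iH0 by blast
  obtain g1 h1 g2 h2 a b where uu: "u = (g1,h1)" and vv: "v = (g2,h2)" and xx: "x = (a,b)"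
    by (cases u, cases v, cases x) auto
  have E1: "g1 = a \<or> EG g1 a" and E2: "h1 = b \<or> EH h1 b" and E3: "g2 = a \<or> EG g2 a" and E4: "h2 = b \<or> EH h2 b"
    using e1 e2 e3 e4 unfolding uu vv xx by simp_all
  have N: "(g1,h1) \<noteq> (g2,h2)" "(a,b) \<noteq> (g1,h1)" "(a,b) \<noteq> (g2,h2)" using uv xu xv uu vv xx by auto
  have PQ: "False" if "g1 \<in> P" "h1 \<in> Q" "g2 \<in> IG" "h2 \<in> OH"
    and E1: "g1 = a \<or> EG g1 a" and E3: "g2 = a \<or> EG g2 a" for g1 h1 g2 h2 a
  proof -
    have "g2 = a" using E3 iG[OF that(3)] by blast
    thus False using E1 iG[OF that(3), of g1] PI that(1,3) by blast
  qed
  have PQ2: "False" if "g1 \<in> P" "h1 \<in> Q" "g2 \<in> OG" "h2 \<in> IH"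
    and E1: "h1 = b \<or> EH h1 b" and E3: "h2 = b \<or> EH h2 b" for g1 h1 g2 h2 b
  proof -
    have "h2 = b" using E3 iH[OF that(4)] by blast
    thus False using E1 iH[OF that(4), of h1] QI that(2,4) by blast
  qed
  have BC: "False" if "g1 \<in> IG" "h1 \<in> OH" "g2 \<in> OG" "h2 \<in> IH"
    and E1: "g1 = a \<or> EG g1 a" and E2: "h1 = b \<or> EH h1 b" and E3: "g2 = a \<or> EG g2 a" and E4: "h2 = b \<or> EH h2 b"
    and N: "(a,b) \<noteq> (g1,h1)" for g1 h1 g2 h2 a b
  proof -
    have "g1 = a" using E1 iG[OF that(1)] by blast
    have "h2 = b" using E4 iH[OF that(4)] by blast
    have "h1 = b" using E2 iH[OF that(4), of h1] \<open>h2 = b\<close> by blast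
    thus False using N \<open>g1 = a\<close> by simp
  qed
  consider (A) "g1 \<in> P" "h1 \<in> Q" | (B) "g1 \<in> IG" "h1 \<in> OH" | (C) "g1 \<in> OG" "h1 \<in> IH"
    using u uu by auto
  note c1 = this
  consider (A) "g2 \<in> P" "h2 \<in> Q" | (B) "g2 \<in> IG" "h2 \<in> OH" | (C) "g2 \<in> OG" "h2 \<in> IH"
    using v vv by auto
  note c2 = this
  show False
  proof (cases rule: c1)
    case A1: A
    show False
    proof (cases rule: c2)
      case A
      show False
      proof (cases "g1 = g2")
        case True
        hence "h1 \<noteq> h2" using N by auto
        thus False using Qd[OF A1(2) A(2) _ E2 E4] by blast
      next
        case False
        thus False using Pd[OF A1(1) A(1) _ E1 E3] by blast
      qed
    next
      case B thus False using PQ[OF A1 B E1 E3] by blast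
    next
      case C thus False using PQ2[OF A1 C E2 E4] by blast
    qed
  next
    case B1: B
    show False
    proof (cases rule: c2)
      case A thus False using PQ[OF A B1 E3 E1] by blast
    next
      case B
      have "g1 = a" "g2 = a" using E1 E3 iG[OF B1(1)] iG[OF B(1)] by blast+
      hence "h1 \<noteq> h2" "b \<noteq> h1" "b \<noteq> h2" using N by auto
      hence "EH h1 b" "EH h2 b" using E2 E4 by auto
      thus False using OHd[OF B1(2) B(2) \<open>h1 \<noteq> h2\<close>] by blast
    next
      case C thus False using BC[OF B1 C E1 E2 E3 E4 N(2)] by blast
    qed
  next
    case C1: C
    show False
    proof (cases rule: c2)
      case A thus False using PQ2[OF A C1 E4 E2] by blast
    next
      case B thus False using BC[OF B C1 E3 E4 E1 E2 N(3)] by blast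
    next
      case C
      have "h1 = b" "h2 = b" using E2 E4 iH[OF C1(2)] iH[OF C(2)] by blast+
      hence "g1 \<noteq> g2" "a \<noteq> g1" "a \<noteq> g2" using N by auto
      hence "EG g1 a" "EG g2 a" using E1 E3 by auto
      thus False using OGd[OF C1(1) C(1) \<open>g1 \<noteq> g2\<close>] by blast
    qed
  qed
qed



lemma lower:
  assumes g: "graph VG EG" "graph VH EH"
  shows "real (open_packing_number (strong_V VG VH) (strong_E VG EG VH EH)) \<ge>
           real (packing_number (del_iso_V VG EG) (del_iso_E VG EG))
             * real (packing_number (del_iso_V VH EH) (del_iso_E VH EH))
           + real (card (isolated VG EG)) * real (open_packing_number VH EH)
           + real (card (isolated VH EH)) * real (open_packing_number VG EG)
           - real (card (isolated VG EG)) * real (card (isolated VH EH))"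
proof -
  have finG: "finite VG" and finH: "finite VH" using g unfolding graph_def by auto
  have finG': "finite (del_iso_V VG EG)" and finH': "finite (del_iso_V VH EH)"
    using finG finH unfolding del_iso_V_def by auto
  obtain P where P: "packing (del_iso_V VG EG) (del_iso_E VG EG) P"
      "card P = packing_number (del_iso_V VG EG) (del_iso_E VG EG)" using pn_ex[OF finG'] by blast
  obtain Q where Q: "packing (del_iso_V VH EH) (del_iso_E VH EH) Q"
      "card Q = packing_number (del_iso_V VH EH) (del_iso_E VH EH)" using pn_ex[OF finH'] by blast
  obtain OG where OG: "open_packing VG EG OG" "card OG = open_packing_number VG EG" using opn_ex[OF finG] by blast
  obtain OH where OH: "open_packing VH EH OH" "card OH = open_packing_number VH EH" using opn_ex[OF finH] by blast
  define IG where "IG = isolated VG EG"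
  define IH where "IH = isolated VH EH"
  define S where "S = P \<times> Q \<union> (IG \<times> OH \<union> OG \<times> IH)"
  have PV: "P \<subseteq> VG - IG" using P unfolding packing_def del_iso_V_def IG_def by auto
  have QV: "Q \<subseteq> VH - IH" using Q unfolding packing_def del_iso_V_def IH_def by auto
  have OGV: "OG \<subseteq> VG" using OG unfolding open_packing_def by auto
  have OHV: "OH \<subseteq> VH" using OH unfolding open_packing_def by auto
  have IGV: "IG \<subseteq> VG" and IHV: "IH \<subseteq> VH" unfolding IG_def IH_def isolated_def by auto
  have Pd: "\<And>g1 g2 a. g1\<in>P \<Longrightarrow> g2\<in>P \<Longrightarrow> g1\<noteq>g2 \<Longrightarrow> g1 = a \<or> EG g1 a \<Longrightarrow> g2 = a \<or> EG g2 a \<Longrightarrow> False"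
  proof -
    fix g1 g2 a assume h: "g1\<in>P" "g2\<in>P" "g1\<noteq>g2" "g1 = a \<or> EG g1 a" "g2 = a \<or> EG g2 a"
    have "cnbhd (del_iso_V VG EG) (del_iso_E VG EG) g1 \<inter> cnbhd (del_iso_V VG EG) (del_iso_E VG EG) g2 = {}"
      using P h unfolding packing_def by blast
    moreover have "g1 \<in> del_iso_V VG EG" "g2 \<in> del_iso_V VG EG" using P h unfolding packing_def by auto
    ultimately have "cnbhd VG EG g1 \<inter> cnbhd VG EG g2 = {}" using cnbhd_del[OF g(1)] by simp
    thus False using h cn_iff[OF g(1)] by blast
  qed
  have Qd: "\<And>g1 g2 a. g1\<in>Q \<Longrightarrow> g2\<in>Q \<Longrightarrow> g1\<noteq>g2 \<Longrightarrow> g1 = a \<or> EH g1 a \<Longrightarrow> g2 = a \<or> EH g2 a \<Longrightarrow> False"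
  proof -
    fix g1 g2 a assume h: "g1\<in>Q" "g2\<in>Q" "g1\<noteq>g2" "g1 = a \<or> EH g1 a" "g2 = a \<or> EH g2 a"
    have "cnbhd (del_iso_V VH EH) (del_iso_E VH EH) g1 \<inter> cnbhd (del_iso_V VH EH) (del_iso_E VH EH) g2 = {}"
      using Q h unfolding packing_def by blast
    moreover have "g1 \<in> del_iso_V VH EH" "g2 \<in> del_iso_V VH EH" using Q h unfolding packing_def by auto
    ultimately have "cnbhd VH EH g1 \<inter> cnbhd VH EH g2 = {}" using cnbhd_del[OF g(2)] by simp
    thus False using h cn_iff[OF g(2)] by blast
  qed
  have OGd: "\<And>g1 g2 a. g1\<in>OG \<Longrightarrow> g2\<in>OG \<Longrightarrow> g1\<noteq>g2 \<Longrightarrow> EG g1 a \<Longrightarrow> EG g2 a \<Longrightarrow> False"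
  proof -
    fix g1 g2 a assume h: "g1\<in>OG" "g2\<in>OG" "g1\<noteq>g2" "EG g1 a" "EG g2 a"
    have "a \<in> nbhd VG EG g1" "a \<in> nbhd VG EG g2" using h g(1) unfolding nbhd_def graph_def by auto
    thus False using opk_disj[OF OG(1) h(1,2,3)] by blast
  qed
  have OHd: "\<And>g1 g2 a. g1\<in>OH \<Longrightarrow> g2\<in>OH \<Longrightarrow> g1\<noteq>g2 \<Longrightarrow> EH g1 a \<Longrightarrow> EH g2 a \<Longrightarrow> False"
  proof -
    fix g1 g2 a assume h: "g1\<in>OH" "g2\<in>OH" "g1\<noteq>g2" "EH g1 a" "EH g2 a"
    have "a \<in> nbhd VH EH g1" "a \<in> nbhd VH EH g2" using h g(2) unfolding nbhd_def graph_def by auto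
    thus False using opk_disj[OF OH(1) h(1,2,3)] by blast
  qed
  have iG: "\<And>g a. g \<in> IG \<Longrightarrow> \<not> EG g a \<and> \<not> EG a g" using iso_noedge[OF g(1)] IG_def by blast
  have iH: "\<And>g a. g \<in> IH \<Longrightarrow> \<not> EH g a \<and> \<not> EH a g" using iso_noedge[OF g(2)] IH_def by blast
  have PI: "P \<inter> IG = {}" and QI: "Q \<inter> IH = {}" using PV QV by auto
  have opS: "open_packing (strong_V VG VH) (strong_E VG EG VH EH) S"
    unfolding open_packing_def
  proof (intro conjI ballI impI)
    show "S \<subseteq> strong_V VG VH" unfolding S_def strong_V_def using PV QV OGV OHV IGV IHV by auto
    fix u v assume u: "u \<in> S" and v: "v \<in> S" and uv: "u \<noteq> v"
    show "nbhd (strong_V VG VH) (strong_E VG EG VH EH) u \<inter> nbhd (strong_V VG VH) (strong_E VG EG VH EH) v = {}"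
    proof (rule ccontr)
      assume "\<not> ?thesis"
      then obtain x where "x \<in> nbhd (strong_V VG VH) (strong_E VG EG VH EH) u"
          "x \<in> nbhd (strong_V VG VH) (strong_E VG EG VH EH) v" by blast
      hence "strong_E VG EG VH EH u x" "strong_E VG EG VH EH v x" by (simp_all add: snbhd)
      hence x: "x \<noteq> u" "x \<noteq> v" "fst u = fst x \<or> EG (fst u) (fst x)" "snd u = snd x \<or> EH (snd u) (snd x)"
        "fst v = fst x \<or> EG (fst v) (fst x)" "snd v = snd x \<or> EH (snd v) (snd x)"
        unfolding strong_E_def by auto
      have Pd0: "\<forall>g1\<in>P. \<forall>g2\<in>P. g1\<noteq>g2 \<longrightarrow> (\<forall>a. (g1 = a \<or> EG g1 a) \<longrightarrow> \<not> (g2 = a \<or> EG g2 a))"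
        using Pd by blast
      have Qd0: "\<forall>g1\<in>Q. \<forall>g2\<in>Q. g1\<noteq>g2 \<longrightarrow> (\<forall>a. (g1 = a \<or> EH g1 a) \<longrightarrow> \<not> (g2 = a \<or> EH g2 a))"
        using Qd by blast
      have OGd0: "\<forall>g1\<in>OG. \<forall>g2\<in>OG. g1\<noteq>g2 \<longrightarrow> (\<forall>a. EG g1 a \<longrightarrow> \<not> EG g2 a)"
        using OGd by blast
      have OHd0: "\<forall>g1\<in>OH. \<forall>g2\<in>OH. g1\<noteq>g2 \<longrightarrow> (\<forall>a. EH g1 a \<longrightarrow> \<not> EH g2 a)"
        using OHd by blast
      have iG0: "\<forall>g\<in>IG. \<forall>a. \<not> EG g a \<and> \<not> EG a g" using iG by blast
      have iH0: "\<forall>g\<in>IH. \<forall>a. \<not> EH g a \<and> \<not> EH a g" using iH by blast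
      show False
        by (rule combi[OF Pd0 Qd0 OGd0 OHd0 iG0 iH0 PI QI u[unfolded S_def] v[unfolded S_def] uv x])
    qed
  qed
  have finS: "finite S" unfolding S_def using finG finH PV QV OGV OHV IGV IHV
    by (meson finite_SigmaI finite_Un finite_subset Diff_subset)
  have fIG: "finite IG" using IGV finG by (rule finite_subset)
  have fIH: "finite IH" using IHV finH by (rule finite_subset)
  have fOG: "finite OG" using OGV finG by (rule finite_subset)
  have fOH: "finite OH" using OHV finH by (rule finite_subset)
  have fP: "finite P" and fQ: "finite Q" using PV QV finG finH finite_subset by (meson Diff_subset)+
  have d1: "P \<times> Q \<inter> (IG \<times> OH \<union> OG \<times> IH) = {}" using PI QI by auto
  have c1: "card S = card P * card Q + card (IG \<times> OH \<union> OG \<times> IH)"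
    unfolding S_def using card_Un_disjoint[OF _ _ d1] fP fQ fIG fIH fOG fOH
    by (simp add: card_cartesian_product)
  have c2: "card (IG \<times> OH \<union> OG \<times> IH) + card ((IG \<times> OH) \<inter> (OG \<times> IH)) = card IG * card OH + card OG * card IH"
    using card_Un_Int[of "IG \<times> OH" "OG \<times> IH"] fIG fIH fOG fOH by (simp add: card_cartesian_product)
  have c3: "card ((IG \<times> OH) \<inter> (OG \<times> IH)) \<le> card IG * card IH"
  proof -
    have "(IG \<times> OH) \<inter> (OG \<times> IH) \<subseteq> IG \<times> IH" by auto
    hence "card ((IG \<times> OH) \<inter> (OG \<times> IH)) \<le> card (IG \<times> IH)"
      using fIG fIH by (intro card_mono) auto
    thus ?thesis by (simp add: card_cartesian_product)
  qed
  have le: "card S \<le> open_packing_number (strong_V VG VH) (strong_E VG EG VH EH)"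
    by (rule opn_ge[OF _ opS]) (simp add: strong_V_def finG finH)
  have "real (card P) * real (card Q) + real (card IG) * real (card OH) + real (card IH) * real (card OG)
         - real (card IG) * real (card IH) \<le> real (card S)"
  proof -
    have "real (card S) = real (card P * card Q) + real (card (IG \<times> OH \<union> OG \<times> IH))" using c1 by simp
    moreover have "real (card (IG \<times> OH \<union> OG \<times> IH)) = real (card IG * card OH + card OG * card IH) - real (card ((IG \<times> OH) \<inter> (OG \<times> IH)))"
      using c2 by (metis add_diff_cancel_right' of_nat_add)
    moreover have "real (card ((IG \<times> OH) \<inter> (OG \<times> IH))) \<le> real (card IG * card IH)" using c3 by linarith
    ultimately show ?thesis by (simp add: algebra_simps)
  qed
  thus ?thesis using le P(2) Q(2) OG(2) OH(2) unfolding IG_def IH_def by (simp add: mult.commute)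
qed



lemma opk_mono: "open_packing V E A \<Longrightarrow> B \<subseteq> A \<Longrightarrow> open_packing V E B"
  unfolding open_packing_def by blast

lemma upper:
  assumes g: "graph VG EG" "graph VH EH"
  shows "real (open_packing_number (strong_V VG VH) (strong_E VG EG VH EH)) \<le>
           min (real (packing_number (del_iso_V VG EG) (del_iso_E VG EG))
                  * frac_dom (del_iso_V VH EH) (del_iso_E VH EH))
               (real (packing_number (del_iso_V VH EH) (del_iso_E VH EH))
                  * frac_dom (del_iso_V VG EG) (del_iso_E VG EG))
           + real (card (isolated VG EG)) * real (open_packing_number VH EH)
           + real (card (isolated VH EH)) * real (open_packing_number VG EG)
           - real (card (isolated VG EG)) * real (card (isolated VH EH))"
proof -
  have finG: "finite VG" and finH: "finite VH" using g unfolding graph_def by auto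
  have finSV: "finite (strong_V VG VH)" unfolding strong_V_def using finG finH by simp
  obtain S where S: "open_packing (strong_V VG VH) (strong_E VG EG VH EH) S"
    "card S = open_packing_number (strong_V VG VH) (strong_E VG EG VH EH)" using opn_ex[OF finSV] by blast
  define IG where "IG = isolated VG EG"
  define IH where "IH = isolated VH EH"
  define VG' where "VG' = del_iso_V VG EG"
  define VH' where "VH' = del_iso_V VH EH"
  have SV: "S \<subseteq> VG \<times> VH" using S(1) unfolding open_packing_def strong_V_def by auto
  have finS: "finite S" using SV finG finH by (meson finite_SigmaI finite_subset)
  have VG': "VG' = VG - IG" and VH': "VH' = VH - IH" unfolding VG'_def VH'_def IG_def IH_def del_iso_V_def by auto
  have IGV: "IG \<subseteq> VG" and IHV: "IH \<subseteq> VH" unfolding IG_def IH_def isolated_def by auto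
  have fIG: "finite IG" using IGV finG by (rule finite_subset)
  have fIH: "finite IH" using IHV finH by (rule finite_subset)
  define SA where "SA = S \<inter> (VG' \<times> VH')"
  define SX where "SX = S \<inter> (VG \<times> IH)"
  define SY where "SY = S \<inter> (IG \<times> VH')"
  have dec: "S = SA \<union> SX \<union> SY" unfolding SA_def SX_def SY_def VG' VH' using SV by auto
  have fA: "finite SA" and fX: "finite SX" and fY: "finite SY" unfolding SA_def SX_def SY_def using finS by auto
  have d1: "SA \<inter> SX = {}" unfolding SA_def SX_def VH' by auto
  have d2: "(SA \<union> SX) \<inter> SY = {}" unfolding SA_def SX_def SY_def VH' VG' by auto
  have cS: "card S = card SA + card SX + card SY"
    unfolding dec using card_Un_disjoint[OF _ _ d2] card_Un_disjoint[OF fA fX d1] fA fX fY by simp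
  have sqA: "sq VG' (del_iso_E VG EG) VH' (del_iso_E VH EH) SA"
    unfolding SA_def VG'_def VH'_def by (rule keyQ[OF g S(1)])
  have cA1: "real (card SA) \<le> real (packing_number VG' (del_iso_E VG EG)) * frac_dom VH' (del_iso_E VH EH)"
    unfolding VG'_def VH'_def
    by (rule step4[OF graph_del[OF g(1)] graph_del[OF g(2)] noiso_del[OF g(1)] noiso_del[OF g(2)] sqA[unfolded VG'_def VH'_def]])
  have inj: "inj_on prod.swap SA" by (rule inj_onI) auto
  have cA2: "real (card SA) \<le> real (packing_number VH' (del_iso_E VH EH)) * frac_dom VG' (del_iso_E VG EG)"
  proof -
    have "real (card (prod.swap ` SA)) \<le> real (packing_number VH' (del_iso_E VH EH)) * frac_dom VG' (del_iso_E VG EG)"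
      unfolding VG'_def VH'_def
      by (rule step4[OF graph_del[OF g(2)] graph_del[OF g(1)] noiso_del[OF g(2)] noiso_del[OF g(1)] sq_swap[OF sqA[unfolded VG'_def VH'_def]]])
    thus ?thesis using card_image[OF inj] by simp
  qed
  have cX: "card SX \<le> card IH * open_packing_number VG EG"
  proof -
    have "SX \<subseteq> (\<Union>h\<in>IH. {g\<in>VG. (g,h)\<in>S} \<times> {h})" unfolding SX_def using SV by auto
    hence "card SX \<le> card (\<Union>h\<in>IH. {g\<in>VG. (g,h)\<in>S} \<times> {h})"
      by (intro card_mono) (use fIH finG in auto)
    also have "\<dots> \<le> (\<Sum>h\<in>IH. card ({g\<in>VG. (g,h)\<in>S} \<times> {h}))" by (rule card_UN_le[OF fIH])
    also have "\<dots> \<le> (\<Sum>h\<in>IH. open_packing_number VG EG)"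
    proof (rule sum_mono)
      fix h assume "h \<in> IH"
      have "card ({g\<in>VG. (g,h)\<in>S} \<times> {h}) = card {g\<in>VG. (g,h)\<in>S}" by (simp add: card_cartesian_product)
      also have "\<dots> \<le> open_packing_number VG EG" by (rule opn_ge[OF finG fibG[OF g S(1)]])
      finally show "card ({g\<in>VG. (g,h)\<in>S} \<times> {h}) \<le> open_packing_number VG EG" .
    qed
    finally show ?thesis by simp
  qed
  have IHop: "open_packing VH EH IH" using add_iso[of VH EH "{}"] unfolding IH_def by (simp add: open_packing_def)
  have IHle: "card IH \<le> open_packing_number VH EH" by (rule opn_ge[OF finH IHop])
  have cY: "card SY \<le> card IG * (open_packing_number VH EH - card IH)"
  proof -
    have "SY \<subseteq> (\<Union>g\<in>IG. {g} \<times> {h\<in>VH'. (g,h)\<in>S})" unfolding SY_def by auto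
    hence "card SY \<le> card (\<Union>g\<in>IG. {g} \<times> {h\<in>VH'. (g,h)\<in>S})"
      by (intro card_mono) (use fIG finH VH' in auto)
    also have "\<dots> \<le> (\<Sum>g\<in>IG. card ({g} \<times> {h\<in>VH'. (g,h)\<in>S}))" by (rule card_UN_le[OF fIG])
    also have "\<dots> \<le> (\<Sum>g\<in>IG. open_packing_number VH EH - card IH)"
    proof (rule sum_mono)
      fix g assume "g \<in> IG"
      define F where "F = {h\<in>VH'. (g,h)\<in>S}"
      have "open_packing VH EH ({h\<in>VH. (g,h)\<in>S} \<union> IH)"
        unfolding IH_def by (rule add_iso[OF fibH[OF g S(1)]])
      hence op: "open_packing VH EH (F \<union> IH)" by (rule opk_mono) (auto simp: F_def VH')
      have fF: "finite F" unfolding F_def VH' using finH by auto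
      have dj: "F \<inter> IH = {}" unfolding F_def VH' by auto
      have "card F + card IH = card (F \<union> IH)" using card_Un_disjoint[OF fF fIH dj] by simp
      also have "\<dots> \<le> open_packing_number VH EH" by (rule opn_ge[OF finH op])
      finally have "card F \<le> open_packing_number VH EH - card IH" by simp
      thus "card ({g} \<times> {h\<in>VH'. (g,h)\<in>S}) \<le> open_packing_number VH EH - card IH"
        unfolding F_def by (simp add: card_cartesian_product)
    qed
    finally show ?thesis by simp
  qed
  have rY: "real (card SY) \<le> real (card IG) * (real (open_packing_number VH EH) - real (card IH))"
  proof -
    have "real (card SY) \<le> real (card IG * (open_packing_number VH EH - card IH))" using cY by linarith
    also have "\<dots> = real (card IG) * (real (open_packing_number VH EH) - real (card IH))"
      using IHle by (simp add: of_nat_diff)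
    finally show ?thesis .
  qed
  have rX: "real (card SX) \<le> real (card IH) * real (open_packing_number VG EG)"
    using cX by (metis of_nat_le_iff of_nat_mult)
  have rA: "real (card SA) \<le> min (real (packing_number VG' (del_iso_E VG EG)) * frac_dom VH' (del_iso_E VH EH))
             (real (packing_number VH' (del_iso_E VH EH)) * frac_dom VG' (del_iso_E VG EG))"
    using cA1 cA2 by simp
  have "real (card S) = real (card SA) + real (card SX) + real (card SY)" using cS by simp
  with rA rX rY S(2) show ?thesis unfolding IG_def IH_def VG'_def VH'_def by (simp only: of_nat_add right_diff_distrib)
qed

theorem mainTheorem11:
  fixes VG :: "'a set" and EG :: "'a \<Rightarrow> 'a \<Rightarrow> bool"
    and VH :: "'b set" and EH :: "'b \<Rightarrow> 'b \<Rightarrow> bool"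
  assumes "graph VG EG" and "graph VH EH"
  defines "iG \<equiv> real (card (isolated VG EG))"
      and "iH \<equiv> real (card (isolated VH EH))"
  shows "(real (open_packing_number (strong_V VG VH) (strong_E VG EG VH EH)) \<ge>
           real (packing_number (del_iso_V VG EG) (del_iso_E VG EG))
             * real (packing_number (del_iso_V VH EH) (del_iso_E VH EH))
           + iG * real (open_packing_number VH EH) + iH * real (open_packing_number VG EG)
           - iG * iH) \<and>
         (real (open_packing_number (strong_V VG VH) (strong_E VG EG VH EH)) \<le>
           min (real (packing_number (del_iso_V VG EG) (del_iso_E VG EG))
                  * frac_dom (del_iso_V VH EH) (del_iso_E VH EH))
               (real (packing_number (del_iso_V VH EH) (del_iso_E VH EH))
                  * frac_dom (del_iso_V VG EG) (del_iso_E VG EG))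
           + iG * real (open_packing_number VH EH) + iH * real (open_packing_number VG EG)
           - iG * iH)"
  using lower[OF assms(1,2)] upper[OF assms(1,2)] unfolding iG_def iH_def by simp

end
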